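(* Let $p\ge1$, $j\ge1$ be integers, $\alpha\in D(A^p)$, and define for $\tau\ge0$ $$v_j(\tau)=\sum_{l=0}^{p-1}\frac{\tau^l}{(l+j)!}A^l\alpha+\tau^p\varphi_{p+j}(\tau A_0)A^p\alpha.$$ Then $v_j$ satisfies $$v_j'(\tau)=\Big(A-\frac{j}{\tau}\Big)v_j(\tau)+\frac{1}{(j-1)!\,\tau}\alpha\ (\tau>0),\qquad v_j(0)=\frac{1}{j!}\alpha,\qquad \partial v_j(\tau)=\sum_{l=0}^{p-1}\frac{\tau^l}{(l+j)!}\partial A^l\alpha.$$
   Context: $X$, $Y$ complex Banach spaces, $A:D(A)\subset X\to X$ linear with dense domain, $\partial:D(A)\to Y$ linear and onto, $\mathrm{Ker}(\partial)$ dense in $X$, and $A_0$, the restriction of $A$ to $D(A_0)=\mathrm{Ker}(\partial)$, generates a $C_0$-semigroup $e^{tA_0}$ of negative type. $\varphi_k(\tau A_0)=\tau^{-k}\int_0^\tau e^{(\tau-\theta)A_0}\theta^{k-1}/(k-1)!\,d\theta$ for $k\ge1$ (and $\varphi_k(0)=1/k!$). $D(A^p)$ denotes the domain of $A^p$. *)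

theory Defs
  imports "HOL-Analysis.Analysis"
begin

definition linear_on :: "'a::real_vector set \<Rightarrow> ('a \<Rightarrow> 'b::real_vector) \<Rightarrow> bool" where
  "linear_on D f \<longleftrightarrow> subspace D \<and>
     (\<forall>x\<in>D. \<forall>y\<in>D. f (x + y) = f x + f y) \<and>
     (\<forall>c. \<forall>x\<in>D. f (c *\<^sub>R x) = c *\<^sub>R f x)"

definition C0_semigroup :: "(real \<Rightarrow> 'a::banach \<Rightarrow> 'a) \<Rightarrow> bool" where
  "C0_semigroup T \<longleftrightarrow>
     (\<forall>t\<ge>0. bounded_linear (T t)) \<and>
     T 0 = id \<and>
     (\<forall>s\<ge>0. \<forall>t\<ge>0. T (s + t) = T s \<circ> T t) \<and>
     (\<forall>x. ((\<lambda>t. T t x) \<longlongrightarrow> x) (at_right 0))"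

definition generates :: "('a::banach \<Rightarrow> 'a) \<Rightarrow> 'a set \<Rightarrow> (real \<Rightarrow> 'a \<Rightarrow> 'a) \<Rightarrow> bool" where
  "generates B D T \<longleftrightarrow> C0_semigroup T \<and>
     (\<forall>x. x \<in> D \<longleftrightarrow> (\<exists>y. ((\<lambda>h. (1 / h) *\<^sub>R (T h x - x)) \<longlongrightarrow> y) (at_right 0))) \<and>
     (\<forall>x\<in>D. ((\<lambda>h. (1 / h) *\<^sub>R (T h x - x)) \<longlongrightarrow> B x) (at_right 0))"

definition negative_type :: "(real \<Rightarrow> 'a::banach \<Rightarrow> 'a) \<Rightarrow> bool" where
  "negative_type T \<longleftrightarrow> (\<exists>M \<omega>. \<omega> < 0 \<and> (\<forall>t\<ge>0. onorm (T t) \<le> M * exp (\<omega> * t)))"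

fun pow_dom :: "('a \<Rightarrow> 'a) \<Rightarrow> 'a set \<Rightarrow> nat \<Rightarrow> 'a set" where
  "pow_dom A DA 0 = UNIV"
| "pow_dom A DA (Suc n) = {x \<in> DA. A x \<in> pow_dom A DA n}"

text \<open>\<open>\<phi>_k(\<tau> A_0) x\<close> where T = e^{t A_0}.\<close>
definition phi_op :: "(real \<Rightarrow> 'a::banach \<Rightarrow> 'a) \<Rightarrow> nat \<Rightarrow> real \<Rightarrow> 'a \<Rightarrow> 'a" where
  "phi_op T k \<tau> x =
     (if \<tau> = 0 then (1 / fact k) *\<^sub>R x
      else (1 / \<tau> ^ k) *\<^sub>R
        integral {0..\<tau>} (\<lambda>\<theta>. (\<theta> ^ (k - 1) / fact (k - 1)) *\<^sub>R T (\<tau> - \<theta>) x))"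

end

theory Submission
  imports Defs "HOL-Analysis.Analysis"
begin

lemma sg_bound:
  assumes "negative_type T"
  obtains M where "M \<ge> 0" "\<And>t. t \<ge> 0 \<Longrightarrow> onorm (T t) \<le> M"
proof -
  obtain M \<omega> where w: "\<omega> < 0" and b: "\<forall>t\<ge>0. onorm (T t) \<le> M * exp (\<omega> * t)"
    using assms unfolding negative_type_def by blast
  have "onorm (T t) \<le> max M 0" if "t \<ge> 0" for t
  proof -
    have e: "exp (\<omega> * t) \<le> 1" "exp (\<omega> * t) > 0" using w that
      by (auto simp: mult_nonpos_nonneg)
    have "M * exp (\<omega> * t) \<le> max M 0"
      using e by (cases "M \<ge> 0") (auto simp: mult_left_le intro: mult_nonpos_nonneg)
    then show ?thesis using b that by force
  qed
  then show ?thesis using that[of "max M 0"] by auto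
qed

lemma sg_diff_bound:
  assumes C: "C0_semigroup T" and M: "\<And>t. t \<ge> 0 \<Longrightarrow> onorm (T t) \<le> M"
    and s: "s \<ge> 0" and t: "t \<ge> 0"
  shows "norm (T s x - T t x) \<le> M * norm (T \<bar>s - t\<bar> x - x)"
proof -
  have bl: "\<And>t. t \<ge> 0 \<Longrightarrow> bounded_linear (T t)" and comp: "\<And>s t. s\<ge>0 \<Longrightarrow> t\<ge>0 \<Longrightarrow> T (s + t) = T s \<circ> T t"
    using C unfolding C0_semigroup_def by auto
  show ?thesis
  proof (cases "s \<ge> t")
    case True
    have "T s x = T t (T (s - t) x)" using comp[of t "s - t"] True t by (simp add: fun_eq_iff)
    then have "T s x - T t x = T t (T (s - t) x - x)"
      using bl[OF t] by (simp add: linear_diff bounded_linear.linear)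
    moreover have "norm (T t (T (s - t) x - x)) \<le> onorm (T t) * norm (T (s - t) x - x)"
      by (rule onorm[OF bl[OF t]])
    moreover have "onorm (T t) * norm (T (s - t) x - x) \<le> M * norm (T (s - t) x - x)"
      using M[OF t] by (simp add: mult_right_mono)
    ultimately show ?thesis using True by simp
  next
    case False
    have "T t x = T s (T (t - s) x)" using comp[of s "t - s"] False s by (simp add: fun_eq_iff)
    then have "T s x - T t x = T s (x - T (t - s) x)"
      using bl[OF s] by (simp add: linear_diff bounded_linear.linear)
    moreover have "norm (T s (x - T (t - s) x)) \<le> onorm (T s) * norm (x - T (t - s) x)"
      by (rule onorm[OF bl[OF s]])
    moreover have "onorm (T s) * norm (x - T (t - s) x) \<le> M * norm (x - T (t - s) x)"
      using M[OF s] by (simp add: mult_right_mono)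
    ultimately show ?thesis using False by (simp add: norm_minus_commute)
  qed
qed

lemma sg_cont:
  assumes C: "C0_semigroup T" and N: "negative_type T"
  shows "continuous_on {0..} (\<lambda>s. T s x)"
proof -
  obtain M where M0: "M \<ge> 0" and M: "\<And>t. t \<ge> 0 \<Longrightarrow> onorm (T t) \<le> M"
    using sg_bound[OF N] by blast
  have lim: "((\<lambda>t. T t x) \<longlongrightarrow> x) (at_right 0)" and T0: "T 0 = id"
    using C unfolding C0_semigroup_def by auto
  show ?thesis
    unfolding continuous_on_iff
  proof (intro ballI allI impI)
    fix t e :: real assume t: "t \<in> {0..}" and e: "e > 0"
    have "e / (M + 1) > 0" using e M0 by simp
    then have "\<forall>\<^sub>F h in at_right 0. dist (T h x) x < e / (M + 1)"
      using tendstoD[OF lim] by blast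
    then obtain d where d: "d > 0" and hd: "\<And>h. 0 < h \<Longrightarrow> h < d \<Longrightarrow> dist (T h x) x < e / (M + 1)"
      unfolding eventually_at_right_field by auto
    show "\<exists>d>0. \<forall>s\<in>{0..}. dist s t < d \<longrightarrow> dist (T s x) (T t x) < e"
    proof (intro exI[of _ d] conjI ballI impI d)
      fix s :: real assume s: "s \<in> {0..}" and st: "dist s t < d"
      have n: "norm (T \<bar>s - t\<bar> x - x) < e / (M + 1)"
      proof (cases "s = t")
        case True then show ?thesis using T0 \<open>e / (M + 1) > 0\<close> by simp
      next
        case False then show ?thesis using hd[of "\<bar>s - t\<bar>"] st by (simp add: dist_norm dist_real_def)
      qed
      have "norm (T s x - T t x) \<le> M * norm (T \<bar>s - t\<bar> x - x)"
        using sg_diff_bound[OF C M] s t by auto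
      also have "\<dots> \<le> M * (e / (M + 1))" using n M0 by (intro mult_left_mono) auto
      also have "\<dots> < e" using M0 e by (simp add: field_simps)
      finally show "dist (T s x) (T t x) < e" by (simp add: dist_norm)
    qed
  qed
qed



lemma vd_quot:
  fixes f :: "real \<Rightarrow> 'a::real_normed_vector"
  assumes "(f has_vector_derivative D) (at x)"
  shows "((\<lambda>h. (1/h) *\<^sub>R (f (x + h) - f x)) \<longlongrightarrow> D) (at 0)"
proof -
  have "((\<lambda>h. norm (f (x + h) - f x - h *\<^sub>R D) / norm h) \<longlongrightarrow> 0) (at 0)"
    using assms unfolding has_vector_derivative_def has_derivative_at by simp
  moreover have "norm (f (x + h) - f x - h *\<^sub>R D) / norm h = norm ((1/h) *\<^sub>R (f (x + h) - f x) - D)"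
    if "h \<noteq> 0" for h
  proof -
    have "(1/h) *\<^sub>R (f (x + h) - f x) - D = (1/h) *\<^sub>R (f (x + h) - f x - h *\<^sub>R D)"
      using that by (simp add: algebra_simps)
    then show ?thesis by (simp add: divide_inverse mult.commute)
  qed
  moreover have "\<forall>\<^sub>F h in at 0. norm (f (x + h) - f x - h *\<^sub>R D) / norm h = norm ((1/h) *\<^sub>R (f (x + h) - f x) - D)"
    using calculation(2) by (auto simp: eventually_at_filter)
  ultimately have "((\<lambda>h. norm ((1/h) *\<^sub>R (f (x + h) - f x) - D)) \<longlongrightarrow> 0) (at 0)"
    using Lim_transform_eventually by fast
  then show ?thesis
    by (simp add: tendsto_norm_zero_iff LIM_zero_iff)
qed

lemma integral_flip:
  fixes f :: "real \<Rightarrow> 'a::banach"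
  shows "integral {0..t} (\<lambda>\<theta>. f (t - \<theta>)) = integral {0..t} f"
proof -
  have "integral {0..t} (\<lambda>\<theta>. f (t - \<theta>)) = integral {-t..0} (\<lambda>y. f (y + t))"
    using Henstock_Kurzweil_Integration.integral_reflect_real[where f="\<lambda>y. f (y + t)" and a="-t" and b=0] by (simp add: uminus_add_conv_diff)
  also have "\<dots> = integral {0..t} f"
    using integral_shift_real_ivl[where f=f and a=0 and b=t and c=t] by simp
  finally show ?thesis .
qed


lemma core:
  fixes T :: "real \<Rightarrow> 'a::banach \<Rightarrow> 'a" and B :: "'a \<Rightarrow> 'a" and x :: "'a" and m :: nat
  assumes C: "C0_semigroup T" and N: "negative_type T"
    and G: "\<forall>x. x \<in> D \<longleftrightarrow> (\<exists>y. ((\<lambda>h. (1 / h) *\<^sub>R (T h x - x)) \<longlongrightarrow> y) (at_right 0))"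
    and GB: "\<forall>x\<in>D. ((\<lambda>h. (1 / h) *\<^sub>R (T h x - x)) \<longlongrightarrow> B x) (at_right 0)"
    and \<tau>: "\<tau> > 0"
  defines "U \<equiv> \<lambda>t. integral {0..t} (\<lambda>\<theta>. (\<theta> ^ m / fact m) *\<^sub>R T (t - \<theta>) x)"
  shows "U \<tau> \<in> D \<and> (U has_vector_derivative (B (U \<tau>) + (\<tau> ^ m / fact m) *\<^sub>R x)) (at \<tau>)"
proof -
  define F where "F = (\<lambda>s. T s x)"
  have Fc: "continuous_on {0..} F" unfolding F_def by (rule sg_cont[OF C N])
  have bl: "\<And>t. t \<ge> 0 \<Longrightarrow> bounded_linear (T t)" and comp: "\<And>s t. s\<ge>0 \<Longrightarrow> t\<ge>0 \<Longrightarrow> T (s + t) = T s \<circ> T t"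
    and T0: "T 0 = id" and lim0: "((\<lambda>t. T t x) \<longlongrightarrow> x) (at_right 0)"
    using C unfolding C0_semigroup_def by auto
  define g where "g = (\<lambda>\<theta>::real. \<theta> ^ m / fact m)"
  have Ueq: "U t = integral {0..t} (\<lambda>\<theta>. g \<theta> *\<^sub>R F (t - \<theta>))" for t
    unfolding U_def g_def F_def ..
  have Kc: "continuous_on {0..t} (\<lambda>\<theta>. g \<theta> *\<^sub>R F (t - \<theta>))" for t
  proof -
    have "continuous_on {0..t} (\<lambda>\<theta>. F (t - \<theta>))"
      by (rule continuous_on_compose2[OF Fc]) (auto intro!: continuous_intros)
    then show ?thesis unfolding g_def by (auto intro!: continuous_intros)
  qed
  have "\<exists>D'. (U has_vector_derivative D') (at \<tau>)"
  proof -
    define c where "c = (\<lambda>k. real (m choose k) / fact m)"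
    define H where "H = (\<lambda>k s. ((- s) ^ (m - k)) *\<^sub>R F s)"
    define W where "W = (\<lambda>t. \<Sum>k\<le>m. (c k * t ^ k) *\<^sub>R integral {0..t} (H k))"
    have Hc: "continuous_on {0..} (H k)" for k
      unfolding H_def by (auto intro!: continuous_intros Fc)
    have UW: "U t = W t" if t: "t \<in> {0<..}" for t
    proof -
      have "U t = integral {0..t} (\<lambda>s. g (t - s) *\<^sub>R F s)"
        unfolding Ueq using integral_flip[where f="\<lambda>s. g (t - s) *\<^sub>R F s" and t=t] by simp
      also have "\<dots> = integral {0..t} (\<lambda>s. \<Sum>k\<le>m. (c k * t ^ k) *\<^sub>R H k s)"
      proof (rule integral_cong)
        fix s :: real
        have "g (t - s) = (\<Sum>k\<le>m. c k * t ^ k * (- s) ^ (m - k))"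
          unfolding g_def c_def using binomial_ring[of t "- s" m]
          by (simp add: sum_divide_distrib algebra_simps)
        then show "g (t - s) *\<^sub>R F s = (\<Sum>k\<le>m. (c k * t ^ k) *\<^sub>R H k s)"
          unfolding H_def by (simp add: scaleR_sum_left)
      qed
      also have "\<dots> = (\<Sum>k\<le>m. integral {0..t} (\<lambda>s. (c k * t ^ k) *\<^sub>R H k s))"
        by (rule integral_sum) (auto intro!: integrable_continuous_real continuous_intros
              continuous_on_subset[OF Hc])
      also have "\<dots> = W t" unfolding W_def by simp
      finally show ?thesis .
    qed
    have Id: "(\<lambda>t. integral {0..t} (H k)) differentiable (at \<tau>)" for k
    proof -
      have "((\<lambda>t. integral {0..t} (H k)) has_vector_derivative H k \<tau>) (at \<tau> within {0..\<tau>+1})"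
        apply (rule integral_has_vector_derivative)
         apply (rule continuous_on_subset[OF Hc])
        using \<tau> by auto
      then have "((\<lambda>t. integral {0..t} (H k)) has_vector_derivative H k \<tau>) (at \<tau> within {0<..<\<tau>+1})"
        by (rule has_vector_derivative_within_subset) auto
      then have "((\<lambda>t. integral {0..t} (H k)) has_vector_derivative H k \<tau>) (at \<tau>)"
        using \<tau> at_within_open[of \<tau> "{0<..<\<tau>+1}"] by simp
      then show ?thesis by (rule differentiableI_vector)
    qed
    have "W differentiable (at \<tau>)"
      unfolding W_def by (intro differentiable_sum differentiable_scaleR Id) (auto intro!: derivative_intros Id)
    then have "(W has_vector_derivative vector_derivative W (at \<tau>)) (at \<tau>)"
      by (simp add: vector_derivative_works)
    then have "(U has_vector_derivative vector_derivative W (at \<tau>)) (at \<tau>)"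
      by (rule has_vector_derivative_transform_within_open[where S="{0<..}"]) (use \<tau> UW in auto)
    then show ?thesis by blast
  qed
  then obtain D' where D': "(U has_vector_derivative D') (at \<tau>)" by blast
  define R where "R = (\<lambda>h. integral {\<tau>..\<tau>+h} (\<lambda>\<theta>. g \<theta> *\<^sub>R F (\<tau> + h - \<theta>)))"
  have shift: "T h (U \<tau>) - U \<tau> = (U (\<tau> + h) - U \<tau>) - R h" if h: "h > 0" for h
  proof -
    have hb: "bounded_linear (T h)" using bl h by simp
    have int0: "(\<lambda>\<theta>. g \<theta> *\<^sub>R F (\<tau> - \<theta>)) integrable_on {0..\<tau>}"
      by (rule integrable_continuous_real[OF Kc])
    have "T h (U \<tau>) = integral {0..\<tau>} (T h \<circ> (\<lambda>\<theta>. g \<theta> *\<^sub>R F (\<tau> - \<theta>)))"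
      unfolding Ueq by (rule integral_linear[OF int0 hb, symmetric])
    also have "\<dots> = integral {0..\<tau>} (\<lambda>\<theta>. g \<theta> *\<^sub>R F (\<tau> + h - \<theta>))"
    proof (rule integral_cong)
      fix \<theta> assume th: "\<theta> \<in> {0..\<tau>}"
      have "T h (g \<theta> *\<^sub>R F (\<tau> - \<theta>)) = g \<theta> *\<^sub>R T h (T (\<tau> - \<theta>) x)"
        unfolding F_def by (simp add: linear_scale[OF bounded_linear.linear[OF hb]])
      also have "T h (T (\<tau> - \<theta>) x) = T (h + (\<tau> - \<theta>)) x"
        using comp[of h "\<tau> - \<theta>"] h th by simp
      finally show "(T h \<circ> (\<lambda>\<theta>. g \<theta> *\<^sub>R F (\<tau> - \<theta>))) \<theta> = g \<theta> *\<^sub>R F (\<tau> + h - \<theta>)"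
        unfolding F_def by (simp add: algebra_simps)
    qed
    also have "\<dots> = U (\<tau> + h) - R h"
    proof -
      have "integral {0..\<tau>} (\<lambda>\<theta>. g \<theta> *\<^sub>R F (\<tau> + h - \<theta>)) + R h = U (\<tau> + h)"
        unfolding R_def Ueq
        by (rule Henstock_Kurzweil_Integration.integral_combine) (use \<tau> h in \<open>auto intro: integrable_continuous_real[OF Kc]\<close>)
      then show ?thesis by (simp add: algebra_simps)
    qed
    finally show ?thesis by simp
  qed
  have Rlim: "((\<lambda>h. (1/h) *\<^sub>R R h) \<longlongrightarrow> g \<tau> *\<^sub>R x) (at_right 0)"
  proof (rule tendstoI)
    fix e :: real assume e: "e > 0"
    define P where "P = (\<lambda>z::real\<times>real. g (fst z) *\<^sub>R F (snd z))"
    have Pc: "continuous_on (UNIV \<times> {0..}) P"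
    proof -
      have "continuous_on (UNIV \<times> {0..}) (\<lambda>z::real\<times>real. F (snd z))"
        by (rule continuous_on_compose2[OF Fc]) (auto intro!: continuous_intros)
      then show ?thesis unfolding P_def g_def by (auto intro!: continuous_intros)
    qed
    have z0: "(\<tau>, 0) \<in> UNIV \<times> {0::real..}" by simp
    obtain d where d: "d > 0" and dP: "\<And>z. z \<in> UNIV \<times> {0..} \<Longrightarrow> dist z (\<tau>, 0) < d \<Longrightarrow> dist (P z) (P (\<tau>, 0)) < e / 2"
      using Pc z0 e unfolding continuous_on_iff by (metis half_gt_zero)
    have P0: "P (\<tau>, 0) = g \<tau> *\<^sub>R x" unfolding P_def F_def using T0 by simp
    have "dist ((1/h) *\<^sub>R R h) (g \<tau> *\<^sub>R x) < e" if h: "0 < h" "h < d" for h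
    proof -
      define K where "K = (\<lambda>\<theta>. g \<theta> *\<^sub>R F (\<tau> + h - \<theta>))"
      have Ki: "K integrable_on {\<tau>..\<tau>+h}"
        unfolding K_def using \<tau> h
        by (intro integrable_continuous_real continuous_on_subset[OF Kc[of "\<tau> + h"]]) auto
      have Kb: "norm (K \<theta> - g \<tau> *\<^sub>R x) \<le> e / 2" if th: "\<theta> \<in> {\<tau>..\<tau>+h}" for \<theta>
      proof -
        have "dist (\<theta>, \<tau> + h - \<theta>) (\<tau>, 0) = norm (\<theta> - \<tau>, \<tau> + h - \<theta>)"
          by (simp add: dist_norm)
        also have "\<dots> \<le> norm (\<theta> - \<tau>) + norm (\<tau> + h - \<theta>)" by (rule norm_Pair_le)
        also have "\<dots> = h" using th by simp
        finally have "dist (\<theta>, \<tau> + h - \<theta>) (\<tau>, 0) < d" using h by simp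
        then have "dist (P (\<theta>, \<tau> + h - \<theta>)) (P (\<tau>, 0)) < e / 2"
          using th by (intro dP) auto
        then show ?thesis unfolding P0 by (simp add: P_def K_def dist_norm)
      qed
      have "R h - h *\<^sub>R (g \<tau> *\<^sub>R x) = integral {\<tau>..\<tau>+h} (\<lambda>\<theta>. K \<theta> - g \<tau> *\<^sub>R x)"
        using h unfolding R_def K_def[symmetric]
        by (subst integral_diff[OF Ki integrable_const_ivl]) (simp add: integral_const_real)
      moreover have "norm (integral {\<tau>..\<tau>+h} (\<lambda>\<theta>. K \<theta> - g \<tau> *\<^sub>R x)) \<le> e / 2 * Henstock_Kurzweil_Integration.content {\<tau>..\<tau>+h}"
        by (rule has_integral_bound_real[where S="{}"])
           (use e Kb in \<open>auto intro!: integrable_integral integrable_diff Ki integrable_const_ivl\<close>)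
      ultimately have n: "norm (R h - h *\<^sub>R (g \<tau> *\<^sub>R x)) \<le> e / 2 * h" using h by simp
      have "(1/h) *\<^sub>R R h - g \<tau> *\<^sub>R x = (1/h) *\<^sub>R (R h - h *\<^sub>R (g \<tau> *\<^sub>R x))"
        using h by (simp add: scaleR_diff_right)
      then have "norm ((1/h) *\<^sub>R R h - g \<tau> *\<^sub>R x) = (1/h) * norm (R h - h *\<^sub>R (g \<tau> *\<^sub>R x))"
        using h by simp
      also have "\<dots> \<le> (1/h) * (e / 2 * h)" using n h by (intro mult_left_mono) auto
      also have "\<dots> < e" using h e by simp
      finally show ?thesis by (simp add: dist_norm)
    qed
    then show "\<forall>\<^sub>F h in at_right 0. dist ((1/h) *\<^sub>R R h) (g \<tau> *\<^sub>R x) < e"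
      unfolding eventually_at_right_field using d by blast
  qed
  have Q: "((\<lambda>h. (1/h) *\<^sub>R (U (\<tau> + h) - U \<tau>)) \<longlongrightarrow> D') (at_right 0)"
    using vd_quot[OF D'] by (rule filterlim_mono) (auto simp: at_le)
  have "((\<lambda>h. (1/h) *\<^sub>R (U (\<tau> + h) - U \<tau>) - (1/h) *\<^sub>R R h) \<longlongrightarrow> D' - g \<tau> *\<^sub>R x) (at_right 0)"
    by (intro tendsto_diff Q Rlim)
  moreover have "\<forall>\<^sub>F h in at_right 0. (1/h) *\<^sub>R (U (\<tau> + h) - U \<tau>) - (1/h) *\<^sub>R R h = (1 / h) *\<^sub>R (T h (U \<tau>) - U \<tau>)"
  proof -
    have "(1/h) *\<^sub>R (U (\<tau> + h) - U \<tau>) - (1/h) *\<^sub>R R h = (1 / h) *\<^sub>R (T h (U \<tau>) - U \<tau>)" if "h > 0" for h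
      by (subst shift[OF that]) (simp add: scaleR_diff_right)
    then show ?thesis by (auto simp: eventually_at_right_field intro!: exI[of _ 1])
  qed
  ultimately have L: "((\<lambda>h. (1 / h) *\<^sub>R (T h (U \<tau>) - U \<tau>)) \<longlongrightarrow> D' - g \<tau> *\<^sub>R x) (at_right 0)"
    using Lim_transform_eventually by fast
  then have UD: "U \<tau> \<in> D" using G by blast
  have "B (U \<tau>) = D' - g \<tau> *\<^sub>R x"
    using tendsto_unique[OF trivial_limit_at_right_real GB[rule_format, OF UD] L] .
  then have "D' = B (U \<tau>) + (\<tau> ^ m / fact m) *\<^sub>R x" unfolding g_def by simp
  with UD D' show ?thesis by simp
qed


lemma sum_id:
  fixes a :: "nat \<Rightarrow> 'a::real_vector" and \<tau> :: real
  assumes \<tau>: "\<tau> > 0" and j: "j \<ge> 1"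
  shows "(\<Sum>l<Suc q. (real l * \<tau> ^ (l - 1) / fact (l + j)) *\<^sub>R a l) + (\<tau> ^ q / fact (q + j)) *\<^sub>R a (Suc q)
    = (\<Sum>l<Suc q. (\<tau> ^ l / fact (l + j)) *\<^sub>R a (Suc l))
      - (real j / \<tau>) *\<^sub>R (\<Sum>l<Suc q. (\<tau> ^ l / fact (l + j)) *\<^sub>R a l)
      + (1 / (fact (j - 1) * \<tau>)) *\<^sub>R a 0"
proof (induction q)
  case 0
  have fj: "fact j = real j * fact (j - 1)" using j by (simp add: fact_reduce)
  have "real j / \<tau> * (1 / fact j) = 1 / (fact (j - 1) * \<tau>)"
    using j \<tau> by (simp add: fj field_simps)
  then show ?case by simp
next
  case (Suc q)
  define X where "X = a (Suc q)"
  define Y where "Y = a (Suc (Suc q))"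
  define d where "d = (\<lambda>l. real l * \<tau> ^ (l - 1) / fact (l + j))"
  define r where "r = (\<lambda>l. \<tau> ^ l / fact (l + j))"
  have sc: "d (Suc q) - r q = - (real j / \<tau>) * r (Suc q)"
  proof -
    have f: "fact (Suc q + j) = real (Suc q + j) * fact (q + j)"
      by (simp add: fact_reduce)
    have fp: "(fact (q + j) :: real) > 0" by simp
    have e1: "real (Suc q) * \<tau> ^ (Suc q - 1) / fact (Suc q + j) = real (Suc q) * \<tau> ^ q / (real (Suc q + j) * fact (q + j))"
      by (simp add: f)
    have e2: "\<tau> ^ Suc q / fact (Suc q + j) = \<tau> * \<tau> ^ q / (real (Suc q + j) * fact (q + j))"
      by (simp add: f)
    have gen: "(Q + 1) * t / ((Q + 1 + J) * K) - t / K = - (J / \<tau>) * (\<tau> * t / ((Q + 1 + J) * K))"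
      if "K > 0" "Q \<ge> 0" "J \<ge> 0" for Q J K t :: real
    proof -
      have q: "Q + 1 + J \<noteq> 0" using that by simp
      have a: "t / K = (Q + 1 + J) * t / ((Q + 1 + J) * K)" using q by simp
      have b: "(J / \<tau>) * (\<tau> * t / ((Q + 1 + J) * K)) = J * t / ((Q + 1 + J) * K)" using \<tau> by simp
      have "(Q + 1) * t / ((Q + 1 + J) * K) - t / K = ((Q + 1) * t - (Q + 1 + J) * t) / ((Q + 1 + J) * K)"
        unfolding a by (simp add: diff_divide_distrib)
      also have "\<dots> = - (J * t / ((Q + 1 + J) * K))" by (simp add: algebra_simps)
      finally show ?thesis using b by (simp only: minus_mult_left)
    qed
    show ?thesis unfolding d_def r_def e1 e2
      using gen[of "fact (q + j)" "real q" "real j" "\<tau> ^ q"] fp by (simp add: add_ac)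
  qed
  have IH: "(\<Sum>l<Suc q. d l *\<^sub>R a l) + r q *\<^sub>R X
    = (\<Sum>l<Suc q. r l *\<^sub>R a (Suc l)) - (real j / \<tau>) *\<^sub>R (\<Sum>l<Suc q. r l *\<^sub>R a l)
      + (1 / (fact (j - 1) * \<tau>)) *\<^sub>R a 0"
    using Suc.IH unfolding d_def r_def X_def .
  have "(\<Sum>l<Suc (Suc q). d l *\<^sub>R a l) + r (Suc q) *\<^sub>R Y
      = ((\<Sum>l<Suc q. d l *\<^sub>R a l) + r q *\<^sub>R X) + (d (Suc q) - r q) *\<^sub>R X + r (Suc q) *\<^sub>R Y"
    by (simp add: X_def algebra_simps)
  also have "\<dots> = (\<Sum>l<Suc q. r l *\<^sub>R a (Suc l)) - (real j / \<tau>) *\<^sub>R (\<Sum>l<Suc q. r l *\<^sub>R a l)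
      + (1 / (fact (j - 1) * \<tau>)) *\<^sub>R a 0 - ((real j / \<tau>) * r (Suc q)) *\<^sub>R X + r (Suc q) *\<^sub>R Y"
    by (simp only: IH sc) (simp add: algebra_simps)
  also have "\<dots> = (\<Sum>l<Suc (Suc q). r l *\<^sub>R a (Suc l)) - (real j / \<tau>) *\<^sub>R (\<Sum>l<Suc (Suc q). r l *\<^sub>R a l)
      + (1 / (fact (j - 1) * \<tau>)) *\<^sub>R a 0"
    by (simp add: X_def Y_def algebra_simps)
  finally show ?case unfolding d_def r_def X_def Y_def .
qed


lemma vec_rearr:
  fixes P S Q R1 K :: "'a::real_vector"
  shows "(P - a *\<^sub>R S + Q) + R1 - a *\<^sub>R K = (P + R1) - a *\<^sub>R (S + K) + Q"
  by (simp add: algebra_simps)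

lemma lin_basic:
  assumes "linear_on D f"
  shows "subspace D" "\<And>x y. x \<in> D \<Longrightarrow> y \<in> D \<Longrightarrow> f (x + y) = f x + f y"
    "\<And>c x. x \<in> D \<Longrightarrow> f (c *\<^sub>R x) = c *\<^sub>R f x" "0 \<in> D" "f 0 = 0"
proof -
  show sD: "subspace D" using assms unfolding linear_on_def by auto
  show "\<And>x y. x \<in> D \<Longrightarrow> y \<in> D \<Longrightarrow> f (x + y) = f x + f y" using assms unfolding linear_on_def by auto
  show sc: "\<And>c x. x \<in> D \<Longrightarrow> f (c *\<^sub>R x) = c *\<^sub>R f x" using assms unfolding linear_on_def by auto
  show z: "0 \<in> D" using sD by (rule real_vector.subspace_0)
  show "f 0 = 0" using sc[OF z, of 0] by simp
qed

lemma lin_sum: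
  assumes L: "linear_on D f" and "finite I" and "\<And>i. i \<in> I \<Longrightarrow> z i \<in> D"
  shows "(\<Sum>i\<in>I. c i *\<^sub>R z i) \<in> D \<and> f (\<Sum>i\<in>I. c i *\<^sub>R z i) = (\<Sum>i\<in>I. c i *\<^sub>R f (z i))"
  using assms(2,3)
proof (induction I rule: finite_induct)
  case empty
  then show ?case using lin_basic[OF L] by simp
next
  case (insert x F)
  have zx: "c x *\<^sub>R z x \<in> D" using insert.prems lin_basic(1)[OF L] by (simp add: real_vector.subspace_scale)
  have IH: "(\<Sum>i\<in>F. c i *\<^sub>R z i) \<in> D \<and> f (\<Sum>i\<in>F. c i *\<^sub>R z i) = (\<Sum>i\<in>F. c i *\<^sub>R f (z i))"
    using insert by auto
  show ?case using insert.hyps zx IH lin_basic[OF L] insert.prems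
    by (simp add: real_vector.subspace_add)
qed

lemma pow_dom_in:
  "x \<in> pow_dom A DA n \<Longrightarrow> l < n \<Longrightarrow> (A ^^ l) x \<in> DA"
proof (induction n arbitrary: x l)
  case 0 then show ?case by simp
next
  case (Suc n)
  show ?case
  proof (cases l)
    case 0 then show ?thesis using Suc.prems by simp
  next
    case (Suc l')
    then have "(A ^^ l) x = (A ^^ l') (A x)" by (simp add: funpow_Suc_right del: funpow.simps)
    then show ?thesis using Suc.IH[of "A x" l'] Suc.prems \<open>l = Suc l'\<close> by simp
  qed
qed

theorem lemma2:
  fixes A :: "'a::banach \<Rightarrow> 'a" and DA :: "'a set"
    and bd :: "'a \<Rightarrow> 'b::banach"
    and T :: "real \<Rightarrow> 'a \<Rightarrow> 'a"
    and p j :: nat and \<alpha> :: 'a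
    and v :: "real \<Rightarrow> 'a"
  assumes A_lin: "linear_on DA A"
    and A_dense: "closure DA = UNIV"
    and bd_lin: "linear_on DA bd"
    and bd_onto: "bd ` DA = UNIV"
    and ker_dense: "closure {x \<in> DA. bd x = 0} = UNIV"
    and gen: "generates A {x \<in> DA. bd x = 0} T"
    and neg: "negative_type T"
    and p: "p \<ge> 1" and j: "j \<ge> 1"
    and \<alpha>: "\<alpha> \<in> pow_dom A DA p"
    and v_def: "\<And>\<tau>. \<tau> \<ge> 0 \<Longrightarrow> v \<tau> =
        (\<Sum>l<p. (\<tau> ^ l / fact (l + j)) *\<^sub>R (A ^^ l) \<alpha>)
        + (\<tau> ^ p) *\<^sub>R phi_op T (p + j) \<tau> ((A ^^ p) \<alpha>)"
  shows "(\<forall>\<tau>>0. v \<tau> \<in> DA \<and>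
           (v has_vector_derivative
              (A (v \<tau>) - (real j / \<tau>) *\<^sub>R v \<tau> + (1 / (fact (j - 1) * \<tau>)) *\<^sub>R \<alpha>)) (at \<tau>))
       \<and> v 0 = (1 / fact j) *\<^sub>R \<alpha>
       \<and> (\<forall>\<tau>\<ge>0. v \<tau> \<in> DA \<and>
           bd (v \<tau>) = (\<Sum>l<p. (\<tau> ^ l / fact (l + j)) *\<^sub>R bd ((A ^^ l) \<alpha>)))"
proof -
  define D0 where "D0 = {x \<in> DA. bd x = 0}"
  have C: "C0_semigroup T"
    and G: "\<forall>x. x \<in> D0 \<longleftrightarrow> (\<exists>y. ((\<lambda>h. (1 / h) *\<^sub>R (T h x - x)) \<longlongrightarrow> y) (at_right 0))"
    and GB: "\<forall>x\<in>D0. ((\<lambda>h. (1 / h) *\<^sub>R (T h x - x)) \<longlongrightarrow> A x) (at_right 0)"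
    using gen unfolding generates_def D0_def by auto
  obtain q where q: "p = Suc q" using p by (cases p) auto
  define y where "y = (A ^^ p) \<alpha>"
  define m where "m = q + j"
  define U where "U = (\<lambda>t. integral {0..t} (\<lambda>\<theta>. (\<theta> ^ m / fact m) *\<^sub>R T (t - \<theta>) y))"
  have core': "U \<tau> \<in> D0 \<and> (U has_vector_derivative (A (U \<tau>) + (\<tau> ^ m / fact m) *\<^sub>R y)) (at \<tau>)"
    if "\<tau> > 0" for \<tau>
    using core[OF C neg G GB that, of m y] unfolding U_def by blast
  define S where "S = (\<lambda>t. \<Sum>l<p. (t ^ l / fact (l + j)) *\<^sub>R (A ^^ l) \<alpha>)"
  have aD: "(A ^^ l) \<alpha> \<in> DA" if "l < p" for l using pow_dom_in[OF \<alpha> that] .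
  have SA: "S t \<in> DA \<and> A (S t) = (\<Sum>l<p. (t ^ l / fact (l + j)) *\<^sub>R (A ^^ Suc l) \<alpha>)" for t
    using lin_sum[OF A_lin, of "{..<p}" "\<lambda>l. (A ^^ l) \<alpha>" "\<lambda>l. t ^ l / fact (l + j)"] aD
    unfolding S_def by simp
  have Sbd: "bd (S t) = (\<Sum>l<p. (t ^ l / fact (l + j)) *\<^sub>R bd ((A ^^ l) \<alpha>))" for t
    using lin_sum[OF bd_lin, of "{..<p}" "\<lambda>l. (A ^^ l) \<alpha>" "\<lambda>l. t ^ l / fact (l + j)"] aD
    unfolding S_def by simp
  have vpos: "v t = S t + (1 / t ^ j) *\<^sub>R U t" if t: "t > 0" for t
  proof -
    have "phi_op T (p + j) t y = (1 / t ^ (p + j)) *\<^sub>R U t"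
      using t unfolding phi_op_def U_def m_def q by simp
    moreover have "t ^ p * (1 / t ^ (p + j)) = 1 / t ^ j"
      using t by (simp add: power_add)
    ultimately show ?thesis using v_def[of t] t unfolding S_def y_def by simp
  qed
  have v0: "v 0 = S 0" using v_def[of 0] p unfolding S_def by simp
  have part2: "v 0 = (1 / fact j) *\<^sub>R \<alpha>"
    unfolding v0 S_def q by (simp add: sum.lessThan_Suc_shift del: sum.lessThan_Suc)
  have part3: "v \<tau> \<in> DA \<and> bd (v \<tau>) = (\<Sum>l<p. (\<tau> ^ l / fact (l + j)) *\<^sub>R bd ((A ^^ l) \<alpha>))"
    if "\<tau> \<ge> 0" for \<tau>
  proof (cases "\<tau> = 0")
    case True then show ?thesis using v0 SA Sbd by simp
  next
    case False
    then have t: "\<tau> > 0" using that by simp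
    have U: "U \<tau> \<in> DA" "bd (U \<tau>) = 0" using core'[OF t] unfolding D0_def by auto
    have kU: "(1 / \<tau> ^ j) *\<^sub>R U \<tau> \<in> DA"
      using U lin_basic(1)[OF A_lin] by (simp add: real_vector.subspace_scale)
    show ?thesis unfolding vpos[OF t]
      using SA[of \<tau>] kU lin_basic[OF bd_lin] U Sbd lin_basic(1)[OF A_lin]
      by (simp add: real_vector.subspace_add)
  qed
  have part1: "v \<tau> \<in> DA \<and> (v has_vector_derivative
              (A (v \<tau>) - (real j / \<tau>) *\<^sub>R v \<tau> + (1 / (fact (j - 1) * \<tau>)) *\<^sub>R \<alpha>)) (at \<tau>)"
    if t: "\<tau> > 0" for \<tau>
  proof -
    have UD: "U \<tau> \<in> DA" and dU: "(U has_vector_derivative (A (U \<tau>) + (\<tau> ^ m / fact m) *\<^sub>R y)) (at \<tau>)"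
      using core'[OF t] unfolding D0_def by auto
    define k where "k = (\<lambda>t::real. 1 / t ^ j)"
    define Sd where "Sd = (\<Sum>l<p. (real l * \<tau> ^ (l - 1) / fact (l + j)) *\<^sub>R (A ^^ l) \<alpha>)"
    have dk: "(k has_real_derivative (- (real j / \<tau>) * (1 / \<tau> ^ j))) (at \<tau>)"
    proof -
      have "(k has_real_derivative (- (real j * \<tau> ^ (j - 1)) / (\<tau> ^ j * \<tau> ^ j))) (at \<tau>)"
        unfolding k_def using t by (auto intro!: derivative_eq_intros)
      moreover have "- (real j * \<tau> ^ (j - 1)) / (\<tau> ^ j * \<tau> ^ j) = - (real j / \<tau>) * (1 / \<tau> ^ j)"
      proof -
        have "\<tau> ^ j = \<tau> * \<tau> ^ (j - 1)" using j by (cases j) auto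
        then show ?thesis using t by (simp add: field_simps)
      qed
      ultimately show ?thesis by simp
    qed
    have dS: "(S has_vector_derivative Sd) (at \<tau>)"
      unfolding S_def Sd_def by (intro has_vector_derivative_sum) (auto intro!: derivative_eq_intros)
    have dw: "((\<lambda>t. S t + k t *\<^sub>R U t) has_vector_derivative
        Sd + (k \<tau> *\<^sub>R (A (U \<tau>) + (\<tau> ^ m / fact m) *\<^sub>R y) + (- (real j / \<tau>) * (1 / \<tau> ^ j)) *\<^sub>R U \<tau>)) (at \<tau>)"
      by (intro has_vector_derivative_add dS has_vector_derivative_scaleR dk dU)
    have dv: "(v has_vector_derivative
        Sd + (k \<tau> *\<^sub>R (A (U \<tau>) + (\<tau> ^ m / fact m) *\<^sub>R y) + (- (real j / \<tau>) * (1 / \<tau> ^ j)) *\<^sub>R U \<tau>)) (at \<tau>)"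
      by (rule has_vector_derivative_transform_within_open[OF dw, where S="{0<..}"])
         (use t vpos in \<open>auto simp: k_def\<close>)
    have kU: "k \<tau> *\<^sub>R U \<tau> \<in> DA"
      using UD lin_basic(1)[OF A_lin] by (simp add: real_vector.subspace_scale)
    have vD: "v \<tau> \<in> DA" using part3[of \<tau>] t by simp
    have Av: "A (v \<tau>) = (\<Sum>l<p. (\<tau> ^ l / fact (l + j)) *\<^sub>R (A ^^ Suc l) \<alpha>) + k \<tau> *\<^sub>R A (U \<tau>)"
      unfolding vpos[OF t] using SA[of \<tau>] kU UD lin_basic[OF A_lin] by (simp add: k_def)
    have key: "Sd + (\<tau> ^ q / fact (q + j)) *\<^sub>R y
      = (\<Sum>l<p. (\<tau> ^ l / fact (l + j)) *\<^sub>R (A ^^ Suc l) \<alpha>) - (real j / \<tau>) *\<^sub>R S \<tau>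
        + (1 / (fact (j - 1) * \<tau>)) *\<^sub>R \<alpha>"
      using sum_id[OF t j, of "\<lambda>l. (A ^^ l) \<alpha>" q] unfolding Sd_def S_def y_def q
      by (simp del: funpow.simps sum.lessThan_Suc)
    have kg: "k \<tau> * (\<tau> ^ m / fact m) = \<tau> ^ q / fact (q + j)"
      unfolding k_def m_def using t by (simp add: power_add)
    have eq: "Sd + (k \<tau> *\<^sub>R (A (U \<tau>) + (\<tau> ^ m / fact m) *\<^sub>R y) + (- (real j / \<tau>) * (1 / \<tau> ^ j)) *\<^sub>R U \<tau>)
      = A (v \<tau>) - (real j / \<tau>) *\<^sub>R v \<tau> + (1 / (fact (j - 1) * \<tau>)) *\<^sub>R \<alpha>"
    proof -
      have "Sd + (k \<tau> *\<^sub>R (A (U \<tau>) + (\<tau> ^ m / fact m) *\<^sub>R y) + (- (real j / \<tau>) * (1 / \<tau> ^ j)) *\<^sub>R U \<tau>)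
        = (Sd + (\<tau> ^ q / fact (q + j)) *\<^sub>R y) + k \<tau> *\<^sub>R A (U \<tau>) - (real j / \<tau>) *\<^sub>R (k \<tau> *\<^sub>R U \<tau>)"
        using kg by (simp add: algebra_simps k_def)
      also have "\<dots> = A (v \<tau>) - (real j / \<tau>) *\<^sub>R v \<tau> + (1 / (fact (j - 1) * \<tau>)) *\<^sub>R \<alpha>"
        proof -
          have kt: "k \<tau> = 1 / \<tau> ^ j" by (simp add: k_def)
          show ?thesis unfolding key Av unfolding vpos[OF t] kt[symmetric] by (rule vec_rearr)
        qed
      finally show ?thesis .
    qed
    show ?thesis using vD dv[unfolded eq] by blast
  qed
  show ?thesis using part1 part2 part3 by blast
qed

end
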